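(* Assume the setting and hypothesis of Theorem 1 stated in the context. Let $U=\{U_1,\dots,U_L\}$ be a partition of $[n]$ that is conditionally independent of $Y_{1:n}$ given $(X_{1:n},A_{1:n})$ (e.g. a deterministic function of $(X_{1:n},A_{1:n})$). For $l\in[L]$ let $N_l^0=|U_l\cap I_{A=0}|$ and $\bar U_l=U_l\cup I_{A=1}$. For each $l$ with $N_l^0\ge1$, let $\hat C^l$ be the prediction set $\hat C$ defined below, computed using only the data $\{(X_i,A_i,Y_iA_i):i\in\bar U_l\}$ (i.e. the distinct feature values, the index sets $I_k,I_k^0,I_k^1$, the counts $N_k,N_k^0$ and $N^{(0)}$ are all computed within $\bar U_l$, so that $N^{(0)}$ becomes $N_l^0$). For $i\in I_{A=0}$, let $l_i$ be the unique $l$ with $i\in U_l$ and define $\hat C_U(X_i,i)=\hat C^{l_i}(X_i)$. Then $$\mathbb E\Big[\frac{1}{N^{(0)}}\sum_{i\in I_{A=0}}\mathbf 1\{Y_i\in\hat C_U(X_i,i)\}\ \Big|\ X_{1:n},A_{1:n}\Big]\ge1-\alpha.$$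
   Context: Setting: $(X_i,A_i,Y_i)_{1\le i\le n}$ random with $X_i\in\mathcal X$, $A_i\in\{0,1\}$, $Y_i\in\mathcal Y$; $Y_i$ observed only when $A_i=1$. Let $X'_1,\dots,X'_M$ be the distinct values among the $X_i$, and $I_k=\{i:X_i=X'_k\}$. Hypothesis: conditionally on $(X_{1:n},A_{1:n})$, the joint law of $(Y_1,\dots,Y_n)$ is invariant under every permutation of $[n]$ mapping each $I_k$ to itself. $s:\mathcal X\times\mathcal Y\to\mathbb R$ is a fixed measurable score function, $S_i=s(X_i,Y_i)$. $I_{A=0}=\{i:A_i=0\}$, $I_{A=1}=\{i:A_i=1\}$, $N^{(0)}=|I_{A=0}|$; $I_k^0=\{i\in I_k:A_i=0\}$, $I_k^1=\{i\in I_k:A_i=1\}$, $N_k=|I_k|$, $N_k^0=|I_k^0|$. The base prediction set (for a dataset with $N^{(0)}\ge1$) is $\hat C(x)=\{y: s(x,y)\le Q_{1-\alpha}(\sum_{k}\sum_{i\in I_k^1}\frac{N_k^0}{N^{(0)}N_k}\delta_{S_i}+\frac{1}{N^{(0)}}\sum_k\frac{(N_k^0)^2}{N_k}\delta_{+\infty})\}$, where $Q_{1-\alpha}(P)=\inf\{t:\mathbb P_{T\sim P}(T\le t)\ge1-\alpha\}$ and $\delta_v$ is a point mass. Coverage proportions over an empty set of missing indices are defined as $1$. *)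

theory Defs
  imports "HOL-Probability.Probability" "HOL-Combinatorics.Permutations"
    "HOL-Library.Disjoint_Sets"
begin

definition blk :: "(nat \<Rightarrow> 'x) \<Rightarrow> nat set \<Rightarrow> nat \<Rightarrow> nat set" where
  "blk x D i = {j \<in> D. x j = x i}"

definition blocks :: "(nat \<Rightarrow> 'x) \<Rightarrow> nat set \<Rightarrow> nat set set" where
  "blocks x D = blk x D ` D"

definition n0 :: "(nat \<Rightarrow> bool) \<Rightarrow> nat set \<Rightarrow> nat" where
  "n0 a B = card {j \<in> B. \<not> a j}"

(* Q_{1-alpha} of the discrete distribution
     sum_k sum_{i in I_k^1} N_k^0/(N^(0) N_k) delta_{S_i}
       + (1/N^(0)) sum_k (N_k^0)^2/N_k delta_{+infty},
   all quantities computed within the data index set D.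
   P(T <= t) is the total weight of the atoms <= t. *)
definition qhat :: "real \<Rightarrow> (nat \<Rightarrow> 'x) \<Rightarrow> (nat \<Rightarrow> bool) \<Rightarrow> (nat \<Rightarrow> real) \<Rightarrow> nat set \<Rightarrow> ereal" where
  "qhat \<alpha> x a S D = Inf {t :: ereal. 1 - \<alpha> \<le>
      (\<Sum>i \<in> {i \<in> D. a i \<and> ereal (S i) \<le> t}.
          real (n0 a (blk x D i)) / (real (n0 a D) * real (card (blk x D i))))
    + (if (\<infinity> :: ereal) \<le> t
       then (1 / real (n0 a D)) * (\<Sum>B \<in> blocks x D. real (n0 a B) ^ 2 / real (card B))
       else 0)}"

definition Chat :: "real \<Rightarrow> ('x \<Rightarrow> 'y \<Rightarrow> real) \<Rightarrow> (nat \<Rightarrow> 'x) \<Rightarrow> (nat \<Rightarrow> bool)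
    \<Rightarrow> (nat \<Rightarrow> 'y) \<Rightarrow> nat set \<Rightarrow> 'x \<Rightarrow> 'y set" where
  "Chat \<alpha> s x a y D x0 = {v. ereal (s x0 v) \<le> qhat \<alpha> x a (\<lambda>i. s (x i) (y i)) D}"

definition part_of :: "nat set set \<Rightarrow> nat \<Rightarrow> nat set" where
  "part_of U i = (THE B. B \<in> U \<and> i \<in> B)"

definition ChatU :: "real \<Rightarrow> ('x \<Rightarrow> 'y \<Rightarrow> real) \<Rightarrow> nat \<Rightarrow> (nat \<Rightarrow> 'x) \<Rightarrow> (nat \<Rightarrow> bool)
    \<Rightarrow> nat set set \<Rightarrow> (nat \<Rightarrow> 'y) \<Rightarrow> nat \<Rightarrow> 'y set" where
  "ChatU \<alpha> s n x a U y i = Chat \<alpha> s x a y (part_of U i \<union> {j \<in> {..<n}. a j}) (x i)"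

definition coverU :: "real \<Rightarrow> ('x \<Rightarrow> 'y \<Rightarrow> real) \<Rightarrow> nat \<Rightarrow> (nat \<Rightarrow> 'x) \<Rightarrow> (nat \<Rightarrow> bool)
    \<Rightarrow> nat set set \<Rightarrow> (nat \<Rightarrow> 'y) \<Rightarrow> real" where
  "coverU \<alpha> s n x a U y =
     (if n0 a {..<n} = 0 then 1
      else (1 / real (n0 a {..<n})) *
        (\<Sum>i \<in> {i \<in> {..<n}. \<not> a i}. indicator (ChatU \<alpha> s n x a U y i) (y i)))"

end

theory Submission
  imports Defs
begin

lemma mass_lemma:
  fixes D :: "'i set" and w S :: "'i \<Rightarrow> real" and c :: real
  assumes fin: "finite D" and nn: "\<forall>j\<in>D. 0 \<le> w j" and tot: "c \<le> sum w D"
  shows "c \<le> (\<Sum>j\<in>D. w j * (if (\<Sum>k\<in>{k\<in>D. S k < S j}. w k) < c then 1 else 0))"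
proof -
  define G where "G = {j\<in>D. (\<Sum>k\<in>{k\<in>D. S k < S j}. w k) < c}"
  have eq: "(\<Sum>j\<in>D. w j * (if (\<Sum>k\<in>{k\<in>D. S k < S j}. w k) < c then 1 else 0)) = sum w G"
    unfolding G_def using fin by (simp add: sum.inter_filter[symmetric] if_distrib cong: if_cong)
  show ?thesis
  proof (cases "D - G = {}")
    case True
    then have "G = D" unfolding G_def by auto
    then show ?thesis using eq tot by simp
  next
    case False
    define m where "m = Min (S ` (D - G))"
    have finDG: "finite (D - G)" using fin by simp
    have "m \<in> S ` (D - G)" unfolding m_def using False finDG by simp
    then obtain j0 where j0: "j0 \<in> D - G" "S j0 = m" by auto
    have mmin: "\<And>k. k \<in> D - G \<Longrightarrow> m \<le> S k" unfolding m_def using finDG by simp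
    have sub: "{k\<in>D. S k < S j0} \<subseteq> G"
    proof
      fix k assume k: "k \<in> {k\<in>D. S k < S j0}"
      show "k \<in> G"
      proof (rule ccontr)
        assume "k \<notin> G"
        then have "m \<le> S k" using k mmin by auto
        then show False using k j0 by auto
      qed
    qed
    have "c \<le> (\<Sum>k\<in>{k\<in>D. S k < S j0}. w k)" using j0 unfolding G_def by auto
    also have "\<dots> \<le> sum w G"
      by (rule sum_mono2) (use fin sub nn in \<open>auto simp: G_def\<close>)
    finally show ?thesis using eq by simp
  qed
qed

lemma blk_eq: "x i = x j \<Longrightarrow> blk x D i = blk x D j"
  unfolding blk_def by simp

lemma swap_blk:
  fixes f :: "nat \<Rightarrow> real"
  assumes fin: "finite D"
  shows "(\<Sum>i\<in>{i\<in>D. \<not> a i}. (\<Sum>j\<in>blk x D i. f j) / real (card (blk x D i)))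
       = (\<Sum>j\<in>D. f j * real (n0 a (blk x D j)) / real (card (blk x D j)))"
proof -
  have "(\<Sum>i\<in>{i\<in>D. \<not> a i}. (\<Sum>j\<in>blk x D i. f j) / real (card (blk x D i)))
      = (\<Sum>i\<in>{i\<in>D. \<not> a i}. \<Sum>j\<in>D. if x j = x i then f j / real (card (blk x D j)) else 0)"
  proof (rule sum.cong[OF refl])
    fix i assume "i \<in> {i\<in>D. \<not> a i}"
    have "(\<Sum>j\<in>blk x D i. f j) / real (card (blk x D i)) = (\<Sum>j\<in>blk x D i. f j / real (card (blk x D i)))"
      by (simp add: sum_divide_distrib)
    also have "\<dots> = (\<Sum>j\<in>blk x D i. f j / real (card (blk x D j)))"
      by (rule sum.cong[OF refl]) (simp add: blk_def)
    also have "\<dots> = (\<Sum>j\<in>D. if x j = x i then f j / real (card (blk x D j)) else 0)"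
      using fin by (simp add: sum.inter_filter blk_def[of x D i])
    finally show "(\<Sum>j\<in>blk x D i. f j) / real (card (blk x D i)) = (\<Sum>j\<in>D. if x j = x i then f j / real (card (blk x D j)) else 0)" .
  qed
  also have "\<dots> = (\<Sum>j\<in>D. \<Sum>i\<in>{i\<in>D. \<not> a i}. if x j = x i then f j / real (card (blk x D j)) else 0)"
    by (rule sum.swap)
  also have "\<dots> = (\<Sum>j\<in>D. f j * real (n0 a (blk x D j)) / real (card (blk x D j)))"
  proof (rule sum.cong[OF refl])
    fix j assume "j \<in> D"
    have "(\<Sum>i\<in>{i\<in>D. \<not> a i}. if x j = x i then f j / real (card (blk x D j)) else 0)
        = (\<Sum>i\<in>{i\<in>{i\<in>D. \<not> a i}. x j = x i}. f j / real (card (blk x D j)))"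
      using fin by (intro sum.inter_filter[symmetric]) auto
    also have "{i\<in>{i\<in>D. \<not> a i}. x j = x i} = {k \<in> blk x D j. \<not> a k}"
      unfolding blk_def by auto
    finally show "(\<Sum>i\<in>{i\<in>D. \<not> a i}. if x j = x i then f j / real (card (blk x D j)) else 0) = f j * real (n0 a (blk x D j)) / real (card (blk x D j))"
      by (simp add: n0_def)
  qed
  finally show ?thesis .
qed

definition wt :: "(nat \<Rightarrow> 'x) \<Rightarrow> (nat \<Rightarrow> bool) \<Rightarrow> nat set \<Rightarrow> nat \<Rightarrow> real" where
  "wt x a D j = real (n0 a (blk x D j)) / (real (n0 a D) * real (card (blk x D j)))"

lemma wt_nonneg: "0 \<le> wt x a D j"
  unfolding wt_def by simp

lemma qhat_char:
  fixes D :: "nat set" and S :: "nat \<Rightarrow> real" and r :: real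
  assumes fin: "finite D" and al: "\<alpha> < 1"
  shows "(ereal r \<le> qhat \<alpha> x a S D) \<longleftrightarrow> (\<Sum>j\<in>{j\<in>D. a j \<and> S j < r}. wt x a D j) < 1 - \<alpha>"
proof -
  define Gh where "Gh t = (\<Sum>i \<in> {i \<in> D. a i \<and> ereal (S i) \<le> t}.
          real (n0 a (blk x D i)) / (real (n0 a D) * real (card (blk x D i))))
    + (if (\<infinity> :: ereal) \<le> t
       then (1 / real (n0 a D)) * (\<Sum>B \<in> blocks x D. real (n0 a B) ^ 2 / real (card B))
       else 0)" for t
  have qd: "qhat \<alpha> x a S D = Inf {t. 1 - \<alpha> \<le> Gh t}"
    unfolding qhat_def Gh_def by simp
  have Ghfin: "t \<noteq> \<infinity> \<Longrightarrow> Gh t = (\<Sum>i \<in> {i \<in> D. a i \<and> ereal (S i) \<le> t}. wt x a D i)" for t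
    unfolding Gh_def wt_def by simp
  show ?thesis
  proof
    assume le: "ereal r \<le> qhat \<alpha> x a S D"
    show "(\<Sum>j\<in>{j\<in>D. a j \<and> S j < r}. wt x a D j) < 1 - \<alpha>"
    proof (rule ccontr)
      assume "\<not> ?thesis"
      then have ge: "1 - \<alpha> \<le> (\<Sum>j\<in>{j\<in>D. a j \<and> S j < r}. wt x a D j)" by simp
      define A where "A = {j\<in>D. a j \<and> S j < r}"
      have finA: "finite A" unfolding A_def using fin by simp
      have "A \<noteq> {}"
      proof
        assume "A = {}"
        then show False using ge al unfolding A_def[symmetric] by simp
      qed
      define m where "m = Max (S ` A)"
      have "m \<in> S ` A" unfolding m_def using finA \<open>A \<noteq> {}\<close> by simp
      then have mr: "m < r" unfolding A_def by auto
      have mge: "\<And>j. j \<in> A \<Longrightarrow> S j \<le> m" unfolding m_def using finA by simp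
      have "(\<Sum>j\<in>A. wt x a D j) \<le> (\<Sum>i \<in> {i \<in> D. a i \<and> ereal (S i) \<le> ereal m}. wt x a D i)"
        by (rule sum_mono2) (use fin mge in \<open>auto simp: A_def wt_nonneg\<close>)
      also have "\<dots> = Gh (ereal m)" using Ghfin by simp
      finally have "1 - \<alpha> \<le> Gh (ereal m)" using ge unfolding A_def by simp
      then have "qhat \<alpha> x a S D \<le> ereal m" unfolding qd by (intro Inf_lower) simp
      then have "ereal r \<le> ereal m" using le by (rule order.trans[rotated])
      then show False using mr by simp
    qed
  next
    assume lt: "(\<Sum>j\<in>{j\<in>D. a j \<and> S j < r}. wt x a D j) < 1 - \<alpha>"
    show "ereal r \<le> qhat \<alpha> x a S D"
      unfolding qd
    proof (rule Inf_greatest)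
      fix t assume "t \<in> {t. 1 - \<alpha> \<le> Gh t}"
      then have t: "1 - \<alpha> \<le> Gh t" by simp
      show "ereal r \<le> t"
      proof (rule ccontr)
        assume "\<not> ereal r \<le> t"
        then have tr: "t < ereal r" by simp
        then have "t \<noteq> \<infinity>" by auto
        then have "Gh t = (\<Sum>i \<in> {i \<in> D. a i \<and> ereal (S i) \<le> t}. wt x a D i)" by (rule Ghfin)
        also have "\<dots> \<le> (\<Sum>j\<in>{j\<in>D. a j \<and> S j < r}. wt x a D j)"
        proof (rule sum_mono2)
          show "finite {j\<in>D. a j \<and> S j < r}" using fin by simp
          show "{i \<in> D. a i \<and> ereal (S i) \<le> t} \<subseteq> {j\<in>D. a j \<and> S j < r}"
            using tr by (auto dest: order.trans[OF _ less_imp_le] simp del: ereal_less_eq)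
               (metis ereal_less(2) less_ereal.simps(1) order_le_less_trans)
        qed (simp add: wt_nonneg)
        finally show False using t lt by simp
      qed
    qed
  qed
qed

definition lsum :: "('x\<Rightarrow>'y\<Rightarrow>real) \<Rightarrow> (nat\<Rightarrow>'x) \<Rightarrow> (nat \<Rightarrow> real) \<Rightarrow> nat set \<Rightarrow> nat \<Rightarrow> (nat \<Rightarrow> 'y) \<Rightarrow> real" where
 "lsum s x w J i y = (\<Sum>j\<in>{j\<in>J. s (x j) (y j) < s (x i) (y i)}. w j)"

lemma lsum_alt: "finite J \<Longrightarrow> lsum s x w J i y = (\<Sum>j\<in>J. if s (x j) (y j) < s (x i) (y i) then w j else 0)"
  unfolding lsum_def by (simp add: sum.inter_filter)

lemma lsum_meas:
  assumes s_meas: "\<And>x0. s x0 \<in> borel_measurable M"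
    and J: "J \<subseteq> {..<n}" and i: "i < n"
  shows "(\<lambda>y. if lsum s x w J i y < c then 1 else 0 :: real) \<in> borel_measurable (PiM {..<n} (\<lambda>_. M))"
proof -
  have finJ: "finite J" using J finite_subset by blast
  have comp: "k < n \<Longrightarrow> (\<lambda>y. s (x k) (y k)) \<in> borel_measurable (PiM {..<n} (\<lambda>_. M))" for k
    using measurable_comp[OF measurable_component_singleton[of k "{..<n}" "\<lambda>_. M"] s_meas[of "x k"]]
    by (simp add: o_def)
  have "(\<lambda>y. \<Sum>j\<in>J. if s (x j) (y j) < s (x i) (y i) then w j else 0) \<in> borel_measurable (PiM {..<n} (\<lambda>_. M))"
  proof (rule borel_measurable_sum)
    fix j assume "j \<in> J"
    then have "j < n" using J by auto
    have "{y \<in> space (PiM {..<n} (\<lambda>_. M)). s (x j) (y j) < s (x i) (y i)} \<in> sets (PiM {..<n} (\<lambda>_. M))"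
      using comp[OF \<open>j<n\<close>] comp[OF i] by (rule borel_measurable_less)
    then show "(\<lambda>y. if s (x j) (y j) < s (x i) (y i) then w j else 0) \<in> borel_measurable (PiM {..<n} (\<lambda>_. M))"
      by (intro measurable_If) auto
  qed
  then have "(\<lambda>y. lsum s x w J i y) \<in> borel_measurable (PiM {..<n} (\<lambda>_. M))"
    using lsum_alt[OF finJ, of s x w i] by (simp add: fun_eq_iff)
  then have "{y \<in> space (PiM {..<n} (\<lambda>_. M)). lsum s x w J i y < c} \<in> sets (PiM {..<n} (\<lambda>_. M))"
    by (rule borel_measurable_less) simp
  then show ?thesis by (intro measurable_If) auto
qed

lemma wt_cong: "x k = x l \<Longrightarrow> wt x a D k = wt x a D l"
  unfolding wt_def using blk_eq[of x k l D] by simp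

lemma lsum_swap:
  assumes D: "D \<subseteq> {..<n}" and fin: "finite D" and i: "i \<in> D" and j: "j \<in> D" and xij: "x i = x j"
  shows "lsum s x (wt x a D) D j (\<lambda>k\<in>{..<n}. y (Transposition.transpose i j k)) = lsum s x (wt x a D) D i y"
proof -
  let ?\<sigma> = "Transposition.transpose i j"
  have xs: "x (?\<sigma> k) = x k" for k using xij by (simp add: Transposition.transpose_def)
  have bij: "bij_betw ?\<sigma> D D" using permutes_swap_id[OF i j] by (rule permutes_imp_bij)
  have inD: "k \<in> D \<Longrightarrow> k \<in> {..<n}" for k using D by auto
  have "lsum s x (wt x a D) D j (\<lambda>k\<in>{..<n}. y (?\<sigma> k))
      = (\<Sum>k\<in>D. if s (x (?\<sigma> k)) (y (?\<sigma> k)) < s (x i) (y i) then wt x a D (?\<sigma> k) else 0)"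
    unfolding lsum_alt[OF fin]
  proof (rule sum.cong[OF refl])
    fix k assume k: "k \<in> D"
    have e1: "(\<lambda>k\<in>{..<n}. y (?\<sigma> k)) k = y (?\<sigma> k)" using inD[OF k] by simp
    have e2: "(\<lambda>k\<in>{..<n}. y (?\<sigma> k)) j = y i" using inD[OF j] by simp
    have e3: "wt x a D (?\<sigma> k) = wt x a D k" by (rule wt_cong) (rule xs)
    show "(if s (x k) ((\<lambda>k\<in>{..<n}. y (?\<sigma> k)) k) < s (x j) ((\<lambda>k\<in>{..<n}. y (?\<sigma> k)) j) then wt x a D k else 0)
        = (if s (x (?\<sigma> k)) (y (?\<sigma> k)) < s (x i) (y i) then wt x a D (?\<sigma> k) else 0)"
      by (simp only: e1 e2 e3 xs xij)
  qed
  also have "\<dots> = (\<Sum>k\<in>D. if s (x k) (y k) < s (x i) (y i) then wt x a D k else 0)"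
    by (rule sum.reindex_bij_betw[OF bij, where g = "\<lambda>k. if s (x k) (y k) < s (x i) (y i) then wt x a D k else 0"])
  also have "\<dots> = lsum s x (wt x a D) D i y" unfolding lsum_alt[OF fin] ..
  finally show ?thesis .
qed

lemma exch_lemma:
  fixes P :: "(nat \<Rightarrow> 'y) measure"
  assumes s_meas: "\<And>x0. s x0 \<in> borel_measurable M"
    and P_sets: "sets P = sets (PiM {..<n} (\<lambda>_. M))"
    and exch: "\<And>\<sigma>. \<sigma> permutes {..<n} \<Longrightarrow> (\<forall>B \<in> blocks x {..<n}. \<sigma> ` B = B) \<Longrightarrow>
        distr P (PiM {..<n} (\<lambda>_. M)) (\<lambda>y. \<lambda>i\<in>{..<n}. y (\<sigma> i)) = P"
    and D: "D \<subseteq> {..<n}" and i: "i \<in> D" and j: "j \<in> D" and xij: "x i = x j"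
  shows "(\<integral>y. (if lsum s x (wt x a D) D j y < c then 1 else 0 :: real) \<partial>P)
       = (\<integral>y. (if lsum s x (wt x a D) D i y < c then 1 else 0 :: real) \<partial>P)"
proof -
  let ?\<sigma> = "Transposition.transpose i j"
  let ?M = "PiM {..<n} (\<lambda>_. M)"
  let ?T = "\<lambda>y. \<lambda>k\<in>{..<n}. y (?\<sigma> k)"
  have fin: "finite D" using D by (rule finite_subset) simp
  have perm: "?\<sigma> permutes {..<n}" using i j D by (intro permutes_swap_id) auto
  have blocks: "\<forall>B \<in> blocks x {..<n}. ?\<sigma> ` B = B"
  proof
    fix B assume "B \<in> blocks x {..<n}"
    then obtain k where k: "B = blk x {..<n} k" "k < n" unfolding blocks_def by auto
    show "?\<sigma> ` B = B"
    proof (cases "x i = x k")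
      case True
      then have "i \<in> B" "j \<in> B" using k i j D xij by (auto simp: blk_def)
      then show ?thesis by (intro permutes_image permutes_swap_id)
    next
      case False
      then have "i \<notin> B" "j \<notin> B" using k xij by (auto simp: blk_def)
      then have "?\<sigma> ` B = id ` B" by (intro image_cong refl) (auto simp: Transposition.transpose_def)
      then show ?thesis by simp
    qed
  qed
  have Tm: "?T \<in> measurable P ?M"
  proof -
    have "?T \<in> measurable ?M ?M"
    proof (rule measurable_restrict)
      fix k assume "k \<in> {..<n}"
      then have "?\<sigma> k \<in> {..<n}" using permutes_in_image[OF perm, of k] by simp
      then show "(\<lambda>y. y (?\<sigma> k)) \<in> measurable ?M M" by (rule measurable_component_singleton)
    qed
    then show ?thesis unfolding measurable_cong_sets[OF P_sets refl] .
  qed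
  have jn: "j < n" using j D by auto
  have fm: "(\<lambda>y. if lsum s x (wt x a D) D j y < c then 1 else 0 :: real) \<in> borel_measurable ?M"
    by (rule lsum_meas[OF s_meas D jn])
  have "(\<integral>y. (if lsum s x (wt x a D) D j y < c then 1 else 0 :: real) \<partial>P)
      = (\<integral>y. (if lsum s x (wt x a D) D j y < c then 1 else 0 :: real) \<partial>(distr P ?M ?T))"
    unfolding exch[OF perm blocks] ..
  also have "\<dots> = (\<integral>y. (if lsum s x (wt x a D) D j (?T y) < c then 1 else 0 :: real) \<partial>P)"
    by (rule integral_distr[OF Tm fm])
  also have "\<dots> = (\<integral>y. (if lsum s x (wt x a D) D i y < c then 1 else 0 :: real) \<partial>P)"
    unfolding lsum_swap[OF D fin i j xij] ..
  finally show ?thesis .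
qed

lemma wt_total:
  assumes fin: "finite D" and pos: "0 < n0 a D"
  shows "(\<Sum>j\<in>D. wt x a D j) = 1"
proof -
  have cpos: "i \<in> D \<Longrightarrow> 0 < card (blk x D i)" for i
    using fin by (subst card_gt_0_iff) (auto simp: blk_def)
  have "(\<Sum>i\<in>{i\<in>D. \<not> a i}. (\<Sum>j\<in>blk x D i. 1) / real (card (blk x D i)))
      = (\<Sum>j\<in>D. 1 * real (n0 a (blk x D j)) / real (card (blk x D j)))"
    by (rule swap_blk[OF fin])
  moreover have "(\<Sum>i\<in>{i\<in>D. \<not> a i}. (\<Sum>j\<in>blk x D i. 1::real) / real (card (blk x D i))) = real (n0 a D)"
  proof -
    have "(\<Sum>i\<in>{i\<in>D. \<not> a i}. (\<Sum>j\<in>blk x D i. 1::real) / real (card (blk x D i))) = (\<Sum>i\<in>{i\<in>D. \<not> a i}. 1)"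
      by (intro sum.cong refl) (use cpos in force)
    then show ?thesis by (simp add: n0_def)
  qed
  ultimately have e: "(\<Sum>j\<in>D. real (n0 a (blk x D j)) / real (card (blk x D j))) = real (n0 a D)"
    by simp
  have "(\<Sum>j\<in>D. wt x a D j) = (\<Sum>j\<in>D. real (n0 a (blk x D j)) / real (card (blk x D j))) / real (n0 a D)"
    unfolding wt_def sum_divide_distrib by (rule sum.cong) (auto simp: field_simps)
  then show ?thesis using e pos by simp
qed

lemma main_D:
  fixes P :: "(nat \<Rightarrow> 'y) measure"
  assumes alpha: "0 < \<alpha>" "\<alpha> < 1"
    and s_meas: "\<And>x0. s x0 \<in> borel_measurable M"
    and P_prob: "prob_space P"
    and P_sets: "sets P = sets (PiM {..<n} (\<lambda>_. M))"
    and exch: "\<And>\<sigma>. \<sigma> permutes {..<n} \<Longrightarrow> (\<forall>B \<in> blocks x {..<n}. \<sigma> ` B = B) \<Longrightarrow>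
        distr P (PiM {..<n} (\<lambda>_. M)) (\<lambda>y. \<lambda>i\<in>{..<n}. y (\<sigma> i)) = P"
    and D: "D \<subseteq> {..<n}" and pos: "0 < n0 a D"
  shows "(1 - \<alpha>) * real (n0 a D) \<le> (\<Sum>i\<in>{i\<in>D. \<not> a i}.
      \<integral>y. (if lsum s x (wt x a D) {j\<in>D. a j} i y < 1 - \<alpha> then 1 else 0 :: real) \<partial>P)"
proof -
  interpret prob_space P by (rule P_prob)
  let ?w = "wt x a D"
  let ?M = "PiM {..<n} (\<lambda>_. M)"
  define cov where "cov i y = (if lsum s x ?w {j\<in>D. a j} i y < 1 - \<alpha> then 1 else 0 :: real)" for i y
  define orc where "orc i y = (if lsum s x ?w D i y < 1 - \<alpha> then 1 else 0 :: real)" for i y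
  define f where "f j = integral\<^sup>L P (orc j)" for j
  have fin: "finite D" using D by (rule finite_subset) simp
  have meas: "(\<lambda>y. if lsum s x ?w J i y < 1 - \<alpha> then 1 else 0 :: real) \<in> borel_measurable P"
    if "J \<subseteq> D" "i \<in> D" for J i
  proof -
    have "J \<subseteq> {..<n}" "i < n" using that D by auto
    from lsum_meas[OF s_meas this] show ?thesis
      unfolding measurable_cong_sets[OF P_sets refl] .
  qed
  have intg: "integrable P (\<lambda>y. if lsum s x ?w J i y < 1 - \<alpha> then 1 else 0 :: real)"
    if "J \<subseteq> D" "i \<in> D" for J i
    by (rule integrable_const_bound[where B=1]) (auto intro: meas[OF that])
  have covi: "integrable P (cov i)" and orci: "integrable P (orc i)" if "i \<in> D" for i
    unfolding cov_def orc_def using intg[OF _ that] by auto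
  have step1: "f i \<le> integral\<^sup>L P (cov i)" if "i \<in> D" for i
    unfolding f_def
  proof (rule integral_mono[OF orci[OF that] covi[OF that]])
    fix y
    have "lsum s x ?w {j\<in>D. a j} i y \<le> lsum s x ?w D i y"
      unfolding lsum_def by (rule sum_mono2) (use fin in \<open>auto simp: wt_nonneg\<close>)
    then show "orc i y \<le> cov i y" unfolding orc_def cov_def by auto
  qed
  have step2: "f i = (\<Sum>j\<in>blk x D i. f j) / real (card (blk x D i))" if "i \<in> D" for i
  proof -
    have "\<forall>j\<in>blk x D i. f j = f i"
    proof
      fix j assume "j \<in> blk x D i"
      then have "j \<in> D" "x i = x j" by (auto simp: blk_def)
      then show "f j = f i" unfolding f_def orc_def
        by (intro exch_lemma[OF s_meas P_sets exch D that]) auto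
    qed
    then have "(\<Sum>j\<in>blk x D i. f j) = real (card (blk x D i)) * f i" by simp
    moreover have "0 < card (blk x D i)"
      using fin that by (subst card_gt_0_iff) (auto simp: blk_def)
    ultimately show ?thesis by simp
  qed
  have tot: "sum ?w D = 1" by (rule wt_total[OF fin pos])
  have step5: "1 - \<alpha> \<le> (\<Sum>j\<in>D. ?w j * f j)"
  proof -
    have "integral\<^sup>L P (\<lambda>y. \<Sum>j\<in>D. ?w j * orc j y) = (\<Sum>j\<in>D. integral\<^sup>L P (\<lambda>y. ?w j * orc j y))"
      by (rule Bochner_Integration.integral_sum[where f="\<lambda>j y. ?w j * orc j y" and I=D]) (auto intro!: orci)
    then have "(\<Sum>j\<in>D. ?w j * f j) = integral\<^sup>L P (\<lambda>y. \<Sum>j\<in>D. ?w j * orc j y)"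
      by (simp add: f_def)
    also have "1 - \<alpha> \<le> \<dots>"
    proof -
      have "integral\<^sup>L P (\<lambda>y. 1 - \<alpha>) \<le> integral\<^sup>L P (\<lambda>y. \<Sum>j\<in>D. ?w j * orc j y)"
      proof (rule integral_mono)
        show "integrable P (\<lambda>y. \<Sum>j\<in>D. ?w j * orc j y)" by (auto intro!: orci)
        fix y
        show "1 - \<alpha> \<le> (\<Sum>j\<in>D. ?w j * orc j y)"
          unfolding orc_def lsum_def
          by (rule mass_lemma[OF fin]) (use tot alpha in \<open>auto simp: wt_nonneg\<close>)
      qed simp
      then show ?thesis by (simp add: prob_space)
    qed
    finally show ?thesis .
  qed
  have "(1 - \<alpha>) * real (n0 a D) \<le> real (n0 a D) * (\<Sum>j\<in>D. ?w j * f j)"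
    using mult_right_mono[OF step5, of "real (n0 a D)"] by (simp add: mult.commute)
  also have "\<dots> = (\<Sum>j\<in>D. f j * real (n0 a (blk x D j)) / real (card (blk x D j)))"
    unfolding sum_distrib_left wt_def using pos by (intro sum.cong) auto
  also have "\<dots> = (\<Sum>i\<in>{i\<in>D. \<not> a i}. (\<Sum>j\<in>blk x D i. f j) / real (card (blk x D i)))"
    by (rule swap_blk[OF fin, symmetric])
  also have "\<dots> = (\<Sum>i\<in>{i\<in>D. \<not> a i}. f i)"
    using step2 by (intro sum.cong) auto
  also have "\<dots> \<le> (\<Sum>i\<in>{i\<in>D. \<not> a i}. integral\<^sup>L P (cov i))"
    using step1 by (intro sum_mono) auto
  finally show ?thesis unfolding cov_def .
qed

definition covf :: "real \<Rightarrow> ('x\<Rightarrow>'y\<Rightarrow>real) \<Rightarrow> (nat \<Rightarrow> 'x) \<Rightarrow> (nat \<Rightarrow> bool) \<Rightarrow> nat set \<Rightarrow> nat \<Rightarrow> (nat \<Rightarrow> 'y) \<Rightarrow> real" where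
  "covf \<alpha> s x a D i y = (if lsum s x (wt x a D) {j\<in>D. a j} i y < 1 - \<alpha> then 1 else 0)"

lemma ind_Chat:
  assumes fin: "finite D" and al: "\<alpha> < 1"
  shows "indicator (Chat \<alpha> s x a y D (x i)) (y i) = covf \<alpha> s x a D i y"
proof -
  have "(ereal (s (x i) (y i)) \<le> qhat \<alpha> x a (\<lambda>j. s (x j) (y j)) D) \<longleftrightarrow>
        (\<Sum>j\<in>{j\<in>D. a j \<and> s (x j) (y j) < s (x i) (y i)}. wt x a D j) < 1 - \<alpha>"
    by (rule qhat_char[OF fin al])
  moreover have "lsum s x (wt x a D) {j\<in>D. a j} i y = (\<Sum>j\<in>{j\<in>D. a j \<and> s (x j) (y j) < s (x i) (y i)}. wt x a D j)"
    unfolding lsum_def by (rule sum.cong) auto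
  ultimately show ?thesis unfolding covf_def Chat_def indicator_def by auto
qed

lemma part_of_eq:
  assumes "partition_on A U" "B \<in> U" "i \<in> B"
  shows "part_of U i = B"
  unfolding part_of_def
proof (rule the_equality)
  show "B \<in> U \<and> i \<in> B" using assms by simp
  fix C assume "C \<in> U \<and> i \<in> C"
  then show "C = B" using assms unfolding partition_on_def disjoint_def by blast
qed

lemma per_U:
  fixes P :: "(nat \<Rightarrow> 'y) measure"
  assumes alpha: "0 < \<alpha>" "\<alpha> < 1"
    and s_meas: "\<And>x0. s x0 \<in> borel_measurable M"
    and P_prob: "prob_space P"
    and P_sets: "sets P = sets (PiM {..<n} (\<lambda>_. M))"
    and exch: "\<And>\<sigma>. \<sigma> permutes {..<n} \<Longrightarrow> (\<forall>B \<in> blocks x {..<n}. \<sigma> ` B = B) \<Longrightarrow>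
        distr P (PiM {..<n} (\<lambda>_. M)) (\<lambda>y. \<lambda>i\<in>{..<n}. y (\<sigma> i)) = P"
    and U: "partition_on {..<n} U"
  shows "1 - \<alpha> \<le> (\<integral>y. coverU \<alpha> s n x a U y \<partial>P)"
proof -
  interpret prob_space P by (rule P_prob)
  let ?O = "{j\<in>{..<n}. a j}"
  let ?Z = "{i\<in>{..<n}. \<not> a i}"
  define DU where "DU B = B \<union> ?O" for B
  have Usub: "B \<in> U \<Longrightarrow> B \<subseteq> {..<n}" for B using U unfolding partition_on_def by auto
  have finU: "finite U"
  proof (rule finite_subset)
    show "U \<subseteq> Pow {..<n}" using Usub by auto
  qed simp
  have DUsub: "B \<in> U \<Longrightarrow> DU B \<subseteq> {..<n}" for B using Usub unfolding DU_def by auto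
  have DUfin: "finite (DU B)" if "B \<in> U" for B using DUsub[OF that] by (rule finite_subset) simp
  have intg: "integrable P (covf \<alpha> s x a D i)" if "D \<subseteq> {..<n}" "i < n" for D i
  proof -
    have "{j\<in>D. a j} \<subseteq> {..<n}" using that by auto
    from lsum_meas[OF s_meas this that(2)] have m: "covf \<alpha> s x a D i \<in> borel_measurable P"
      unfolding measurable_cong_sets[OF P_sets refl] covf_def[abs_def] .
    show ?thesis by (rule integrable_const_bound[where B=1]) (use m in \<open>auto simp: covf_def\<close>)
  qed
  show ?thesis
  proof (cases "n0 a {..<n} = 0")
    case True
    then show ?thesis using alpha by (simp add: coverU_def prob_space)
  next
    case False
    let ?N = "real (n0 a {..<n})"
    have Zeq: "?Z = (\<Union>B\<in>U. {i\<in>B. \<not> a i})" using U unfolding partition_on_def by auto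
    have disj: "\<forall>B\<in>U. \<forall>C\<in>U. B \<noteq> C \<longrightarrow> {i\<in>B. \<not> a i} \<inter> {i\<in>C. \<not> a i} = {}"
    proof (intro ballI impI)
      fix B C assume "B \<in> U" "C \<in> U" "B \<noteq> C"
      then have "B \<inter> C = {}" using U unfolding partition_on_def disjoint_def by auto
      then show "{i\<in>B. \<not> a i} \<inter> {i\<in>C. \<not> a i} = {}" by auto
    qed
    have finB: "\<forall>B\<in>U. finite {i\<in>B. \<not> a i}"
    proof
      fix B assume "B \<in> U"
      then have "{i\<in>B. \<not> a i} \<subseteq> {..<n}" using Usub by auto
      then show "finite {i\<in>B. \<not> a i}" by (rule finite_subset) simp
    qed
    have ind: "i \<in> ?Z \<Longrightarrow> indicator (ChatU \<alpha> s n x a U y i) (y i) = covf \<alpha> s x a (DU (part_of U i)) i y" for i y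
    proof -
      assume i: "i \<in> ?Z"
      then obtain B where B: "B \<in> U" "i \<in> B" using U unfolding partition_on_def by auto
      then have "part_of U i = B" by (rule part_of_eq[OF U])
      then show ?thesis unfolding ChatU_def DU_def[symmetric]
        using ind_Chat[OF DUfin[OF B(1)] alpha(2)] by simp
    qed
    have cov_eq: "coverU \<alpha> s n x a U y = (1 / ?N) * (\<Sum>i\<in>?Z. covf \<alpha> s x a (DU (part_of U i)) i y)" for y
      unfolding coverU_def using False ind by simp
    have "(\<integral>y. coverU \<alpha> s n x a U y \<partial>P) = (1 / ?N) * (\<Sum>i\<in>?Z. \<integral>y. covf \<alpha> s x a (DU (part_of U i)) i y \<partial>P)"
    proof -
      have "(\<integral>y. (\<Sum>i\<in>?Z. covf \<alpha> s x a (DU (part_of U i)) i y) \<partial>P) = (\<Sum>i\<in>?Z. \<integral>y. covf \<alpha> s x a (DU (part_of U i)) i y \<partial>P)"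
      proof (rule Bochner_Integration.integral_sum[where f="\<lambda>i y. covf \<alpha> s x a (DU (part_of U i)) i y"])
        fix i assume i: "i \<in> ?Z"
        then obtain B where B: "B \<in> U" "i \<in> B" using U unfolding partition_on_def by auto
        then have "part_of U i = B" by (rule part_of_eq[OF U])
        then show "integrable P (covf \<alpha> s x a (DU (part_of U i)) i)"
          using intg[OF DUsub[OF B(1)]] i by simp
      qed
      then show ?thesis unfolding cov_eq by simp
    qed
    also have "1 - \<alpha> \<le> (1 / ?N) * (\<Sum>i\<in>?Z. \<integral>y. covf \<alpha> s x a (DU (part_of U i)) i y \<partial>P)"
    proof -
      have "(\<Sum>i\<in>?Z. \<integral>y. covf \<alpha> s x a (DU (part_of U i)) i y \<partial>P)
          = (\<Sum>B\<in>U. \<Sum>i\<in>{i\<in>B. \<not> a i}. \<integral>y. covf \<alpha> s x a (DU (part_of U i)) i y \<partial>P)"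
        unfolding Zeq by (rule sum.UNION_disjoint[OF finU finB disj])
      also have "\<dots> = (\<Sum>B\<in>U. \<Sum>i\<in>{i\<in>DU B. \<not> a i}. \<integral>y. covf \<alpha> s x a (DU B) i y \<partial>P)"
      proof (rule sum.cong[OF refl])
        fix B assume B: "B \<in> U"
        have "{i\<in>DU B. \<not> a i} = {i\<in>B. \<not> a i}" unfolding DU_def by auto
        moreover have "i \<in> {i\<in>B. \<not> a i} \<Longrightarrow> part_of U i = B" for i using part_of_eq[OF U B] by auto
        ultimately show "(\<Sum>i\<in>{i\<in>B. \<not> a i}. \<integral>y. covf \<alpha> s x a (DU (part_of U i)) i y \<partial>P)
            = (\<Sum>i\<in>{i\<in>DU B. \<not> a i}. \<integral>y. covf \<alpha> s x a (DU B) i y \<partial>P)"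
          by (intro sum.cong) auto
      qed
      also have "\<dots> \<ge> (\<Sum>B\<in>U. (1 - \<alpha>) * real (n0 a (DU B)))"
      proof (rule sum_mono)
        fix B assume B: "B \<in> U"
        show "(1 - \<alpha>) * real (n0 a (DU B)) \<le> (\<Sum>i\<in>{i\<in>DU B. \<not> a i}. \<integral>y. covf \<alpha> s x a (DU B) i y \<partial>P)"
        proof (cases "n0 a (DU B) = 0")
          case True
          then have emp: "{i\<in>DU B. \<not> a i} = {}" unfolding n0_def using DUfin[OF B] by simp
          show ?thesis unfolding emp using True by simp
        next
          case False
          then show ?thesis unfolding covf_def
            using main_D[OF alpha s_meas P_prob P_sets exch DUsub[OF B]] by simp
        qed
      qed
      finally have ge: "(\<Sum>B\<in>U. (1 - \<alpha>) * real (n0 a (DU B))) \<le> (\<Sum>i\<in>?Z. \<integral>y. covf \<alpha> s x a (DU (part_of U i)) i y \<partial>P)" .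
      have "(\<Sum>B\<in>U. real (n0 a (DU B))) = (\<Sum>B\<in>U. \<Sum>i\<in>{i\<in>B. \<not> a i}. (1::real))"
      proof (rule sum.cong[OF refl])
        fix B assume "B \<in> U"
        have "{i\<in>DU B. \<not> a i} = {i\<in>B. \<not> a i}" unfolding DU_def by auto
        then show "real (n0 a (DU B)) = (\<Sum>i\<in>{i\<in>B. \<not> a i}. (1::real))" by (simp add: n0_def)
      qed
      also have "\<dots> = (\<Sum>i\<in>?Z. (1::real))"
        unfolding Zeq by (rule sum.UNION_disjoint[OF finU finB disj, symmetric])
      also have "\<dots> = ?N" by (simp add: n0_def)
      finally have "(\<Sum>B\<in>U. (1 - \<alpha>) * real (n0 a (DU B))) = (1 - \<alpha>) * ?N"
        by (simp add: sum_distrib_left[symmetric])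
      with ge have "(1 - \<alpha>) * ?N \<le> (\<Sum>i\<in>?Z. \<integral>y. covf \<alpha> s x a (DU (part_of U i)) i y \<partial>P)" by simp
      then show ?thesis using False by (simp add: field_simps)
    qed
    finally show ?thesis .
  qed
qed

theorem corollary1:
  fixes n :: nat and \<alpha> :: real
    and x :: "nat \<Rightarrow> 'x" and a :: "nat \<Rightarrow> bool"
    and M :: "'y measure" and s :: "'x \<Rightarrow> 'y \<Rightarrow> real"
    and P :: "(nat \<Rightarrow> 'y) measure"
    and Q :: "nat set set pmf"
  assumes alpha: "0 < \<alpha>" "\<alpha> < 1"
    and s_meas: "\<And>x0. s x0 \<in> borel_measurable M"
    and P_prob: "prob_space P"
    and P_sets: "sets P = sets (PiM {..<n} (\<lambda>_. M))"
    and exch: "\<And>\<sigma>. \<sigma> permutes {..<n} \<Longrightarrow> (\<forall>B \<in> blocks x {..<n}. \<sigma> ` B = B) \<Longrightarrow>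
        distr P (PiM {..<n} (\<lambda>_. M)) (\<lambda>y. \<lambda>i\<in>{..<n}. y (\<sigma> i)) = P"
    and Q_part: "\<And>U. U \<in> set_pmf Q \<Longrightarrow> partition_on {..<n} U"
  shows "measure_pmf.expectation Q (\<lambda>U. \<integral>y. coverU \<alpha> s n x a U y \<partial>P) \<ge> 1 - \<alpha>"
proof -
  have "set_pmf Q \<subseteq> Pow (Pow {..<n})"
    using Q_part unfolding partition_on_def by blast
  then have fin: "finite (set_pmf Q)" by (rule finite_subset) simp
  show ?thesis
  proof (rule measure_pmf.integral_ge_const)
    show "integrable (measure_pmf Q) (\<lambda>U. \<integral>y. coverU \<alpha> s n x a U y \<partial>P)"
      by (rule integrable_measure_pmf_finite[OF fin])
    show "AE U in measure_pmf Q. 1 - \<alpha> \<le> (\<integral>y. coverU \<alpha> s n x a U y \<partial>P)"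
    proof (rule AE_pmfI)
      fix U assume "U \<in> set_pmf Q"
      show "1 - \<alpha> \<le> (\<integral>y. coverU \<alpha> s n x a U y \<partial>P)"
        by (rule per_U[OF alpha s_meas P_prob P_sets exch Q_part[OF \<open>U \<in> set_pmf Q\<close>]])
    qed
  qed
qed

end
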